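(* Let $k\ge1$. If $k$ is even, the evaluation problem of $\Sigma_k$-DNF (i.e. the class of $\tau$-structures encoding true $\Sigma_k$-DNF formulas) is definable by a $\Sigma^1_{k+1}\text{-}\mathrm{KROM}^r(\tau)$ sentence; if $k$ is odd, the evaluation problem of $\Pi_k$-DNF is definable by a $\Pi^1_{k+1}\text{-}\mathrm{KROM}^r(\tau)$ sentence. Here $\tau=\{\mathrm{Clause},\mathrm{Var}_1,\dots,\mathrm{Var}_k,\mathrm{Pos},\mathrm{Neg}\}$ and formulas are encoded as described in the context.
   Context: A $\Sigma_k$-DNF (resp. $\Pi_k$-DNF) formula is a quantified Boolean formula $Q_1\bar{x}_1Q_2\bar{x}_2\cdots Q_k\bar{x}_k\,\phi$ with alternating quantifier blocks, $Q_1=\exists$ (resp. $Q_1=\forall$), and quantifier-free matrix $\phi$ in disjunctive normal form (a disjunction of "clauses", each a conjunction of literals). Such a formula is encoded by a finite structure over $\tau=\{\mathrm{Clause},\mathrm{Var}_1,\dots,\mathrm{Var}_k,\mathrm{Pos},\mathrm{Neg}\}$ ($\mathrm{Clause},\mathrm{Var}_h$ unary, $\mathrm{Pos},\mathrm{Neg}$ binary) whose domain consists of the clauses and variables, where $\mathrm{Clause}\,i$ holds iff $i$ is a clause, $\mathrm{Var}_h\,j$ iff $j$ is a variable of block $\bar{x}_h$, and $\mathrm{Pos}\,ij$ (resp. $\mathrm{Neg}\,ij$) iff variable $j$ occurs positively (resp. negatively) in clause $i$. For a vocabulary $\tau$, an SO-KROM$^r(\tau)$ formula is a second-order formula $Q_1R_1\cdots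 Q_mR_m\forall\bar{x}(C_1\wedge\cdots\wedge C_n)$, where each $Q_i\in\{\forall,\exists\}$, $R_i$ are second-order relation variables, and each clause $C_j$ is a disjunction $\beta_1\vee\cdots\vee\beta_q\vee H_1\vee H_2$ in which each $\beta_s$ is an atomic or negated atomic $\tau$-formula (equality included), and each $H_t$ is one of $R_i\bar{z}$, $\neg R_i\bar{z}$, $\exists z_1\cdots\exists z_{r}R_i z_1\dots z_r$ ($r$ the arity of $R_i$), or $\bot$. $\Sigma^1_k\text{-}\mathrm{KROM}^r$ (resp. $\Pi^1_k\text{-}\mathrm{KROM}^r$) is the set of SO-KROM$^r$ formulas whose second-order prefix starts with an existential (resp. universal) quantifier and has exactly $k-1$ alternations between blocks of existential and universal quantifiers. *)

theory Defs
  imports Main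
begin

text \<open>Universe elements are natural numbers (every finite structure is isomorphic to one
  over nat). Var h x means x is a variable of block h (1 <= h <= k).\<close>

record tstruct =
  dom    :: "nat set"
  Clause :: "nat \<Rightarrow> bool"
  Var    :: "nat \<Rightarrow> nat \<Rightarrow> bool"
  Pos    :: "nat \<Rightarrow> nat \<Rightarrow> bool"
  Neg    :: "nat \<Rightarrow> nat \<Rightarrow> bool"

definition tau_structure :: "nat \<Rightarrow> tstruct \<Rightarrow> bool" where
  "tau_structure k A \<longleftrightarrow> finite (dom A) \<and> dom A \<noteq> {} \<and>
     (\<forall>x. Clause A x \<longrightarrow> x \<in> dom A) \<and>
     (\<forall>h x. Var A h x \<longrightarrow> 1 \<le> h \<and> h \<le> k \<and> x \<in> dom A) \<and>
     (\<forall>x y. Pos A x y \<longrightarrow> x \<in> dom A \<and> y \<in> dom A) \<and>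
     (\<forall>x y. Neg A x y \<longrightarrow> x \<in> dom A \<and> y \<in> dom A)"

definition encodes_qdnf :: "nat \<Rightarrow> tstruct \<Rightarrow> bool" where
  "encodes_qdnf k A \<longleftrightarrow>
     (\<forall>x\<in>dom A. (Clause A x \<and> (\<forall>h. \<not> Var A h x)) \<or> (\<not> Clause A x \<and> (\<exists>!h. Var A h x))) \<and>
     (\<forall>i j. Pos A i j \<longrightarrow> Clause A i \<and> \<not> Clause A j) \<and>
     (\<forall>i j. Neg A i j \<longrightarrow> Clause A i \<and> \<not> Clause A j)"

definition dnf_true :: "tstruct \<Rightarrow> (nat \<Rightarrow> bool) \<Rightarrow> bool" where
  "dnf_true A \<sigma> \<longleftrightarrow> (\<exists>i\<in>dom A. Clause A i \<and>
      (\<forall>j\<in>dom A. (Pos A i j \<longrightarrow> \<sigma> j) \<and> (Neg A i j \<longrightarrow> \<not> \<sigma> j)))"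

definition upd_block :: "tstruct \<Rightarrow> nat \<Rightarrow> (nat \<Rightarrow> bool) \<Rightarrow> (nat \<Rightarrow> bool) \<Rightarrow> (nat \<Rightarrow> bool)" where
  "upd_block A h f \<sigma> = (\<lambda>j. if Var A h j then f j else \<sigma> j)"

text \<open>qeval A k ex m sigma: the last m blocks (k-m+1 .. k) are still to be quantified,
  the current block being quantified existentially iff ex; quantifiers alternate.\<close>
fun qeval :: "tstruct \<Rightarrow> nat \<Rightarrow> bool \<Rightarrow> nat \<Rightarrow> (nat \<Rightarrow> bool) \<Rightarrow> bool" where
  "qeval A k ex 0 \<sigma> = dnf_true A \<sigma>"
| "qeval A k ex (Suc m) \<sigma> =
     (if ex then (\<exists>f. qeval A k (\<not> ex) m (upd_block A (k - m) f \<sigma>))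
      else (\<forall>f. qeval A k (\<not> ex) m (upd_block A (k - m) f \<sigma>)))"

definition sigma_dnf_eval :: "nat \<Rightarrow> tstruct set" where
  "sigma_dnf_eval k = {A. tau_structure k A \<and> encodes_qdnf k A \<and> qeval A k True k (\<lambda>_. False)}"

definition pi_dnf_eval :: "nat \<Rightarrow> tstruct set" where
  "pi_dnf_eval k = {A. tau_structure k A \<and> encodes_qdnf k A \<and> qeval A k False k (\<lambda>_. False)}"

datatype tatom = AClause nat | AVar nat nat | APos nat nat | ANeg nat nat | AEq nat nat

text \<open>Second-order literal slots H_t: R_i zs, not R_i zs, (exists zs. R_i zs), bottom.
  i indexes the second-order prefix.\<close>
datatype hlit = HPos nat "nat list" | HNeg nat "nat list" | HEx nat | HBot

text \<open>A clause beta_1 \/ ... \/ beta_q \/ H_1 \/ H_2; each beta is (polarity, atom).\<close>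
type_synonym kclause = "(bool \<times> tatom) list \<times> hlit \<times> hlit"

text \<open>A sentence Q_1 R_1 ... Q_m R_m forall x. (C_1 /\ ... /\ C_n): the prefix lists
  (is_existential, arity) for each R_i.\<close>
type_synonym krom = "(bool \<times> nat) list \<times> kclause list"

fun tatom_wf :: "nat \<Rightarrow> tatom \<Rightarrow> bool" where
  "tatom_wf k (AVar h z) = (1 \<le> h \<and> h \<le> k)"
| "tatom_wf k _ = True"

fun hlit_wf :: "(bool \<times> nat) list \<Rightarrow> hlit \<Rightarrow> bool" where
  "hlit_wf P (HPos i zs) = (i < length P \<and> length zs = snd (P ! i))"
| "hlit_wf P (HNeg i zs) = (i < length P \<and> length zs = snd (P ! i))"
| "hlit_wf P (HEx i) = (i < length P)"
| "hlit_wf P HBot = True"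

definition krom_wf :: "nat \<Rightarrow> krom \<Rightarrow> bool" where
  "krom_wf k \<phi> \<longleftrightarrow> (\<forall>(bs, h1, h2) \<in> set (snd \<phi>).
      (\<forall>(b, a) \<in> set bs. tatom_wf k a) \<and> hlit_wf (fst \<phi>) h1 \<and> hlit_wf (fst \<phi>) h2)"

fun alternations :: "bool list \<Rightarrow> nat" where
  "alternations (a # b # xs) = (if a = b then 0 else 1) + alternations (b # xs)"
| "alternations _ = 0"

text \<open>Sigma^1_m-KROM^r (ex = True) / Pi^1_m-KROM^r (ex = False) over tau with k variable blocks:
  prefix starts with the given quantifier and has exactly m-1 alternations.\<close>
definition krom_class :: "bool \<Rightarrow> nat \<Rightarrow> nat \<Rightarrow> krom \<Rightarrow> bool" where
  "krom_class ex m k \<phi> \<longleftrightarrow> krom_wf k \<phi> \<and> fst \<phi> \<noteq> [] \<and> fst (hd (fst \<phi>)) = ex \<and>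
     alternations (map fst (fst \<phi>)) = m - 1"

fun tatom_sem :: "tstruct \<Rightarrow> (nat \<Rightarrow> nat) \<Rightarrow> tatom \<Rightarrow> bool" where
  "tatom_sem A v (AClause z) = Clause A (v z)"
| "tatom_sem A v (AVar h z) = Var A h (v z)"
| "tatom_sem A v (APos z z') = Pos A (v z) (v z')"
| "tatom_sem A v (ANeg z z') = Neg A (v z) (v z')"
| "tatom_sem A v (AEq z z') = (v z = v z')"

fun hlit_sem :: "tstruct \<Rightarrow> (bool \<times> nat) list \<Rightarrow> nat list set list \<Rightarrow> (nat \<Rightarrow> nat) \<Rightarrow> hlit \<Rightarrow> bool" where
  "hlit_sem A P Rs v (HPos i zs) = (map v zs \<in> Rs ! i)"
| "hlit_sem A P Rs v (HNeg i zs) = (map v zs \<notin> Rs ! i)"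
| "hlit_sem A P Rs v (HEx i) =
     (\<exists>us. length us = snd (P ! i) \<and> set us \<subseteq> dom A \<and> us \<in> Rs ! i)"
| "hlit_sem A P Rs v HBot = False"

definition kclause_sem :: "tstruct \<Rightarrow> (bool \<times> nat) list \<Rightarrow> nat list set list \<Rightarrow> (nat \<Rightarrow> nat) \<Rightarrow> kclause \<Rightarrow> bool" where
  "kclause_sem A P Rs v c = (case c of (bs, h1, h2) \<Rightarrow>
     (\<exists>(b, a) \<in> set bs. tatom_sem A v a = b) \<or> hlit_sem A P Rs v h1 \<or> hlit_sem A P Rs v h2)"

definition matrix_sem :: "tstruct \<Rightarrow> (bool \<times> nat) list \<Rightarrow> nat list set list \<Rightarrow> kclause list \<Rightarrow> bool" where
  "matrix_sem A P Rs cs \<longleftrightarrow>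
     (\<forall>v. (\<forall>x. v x \<in> dom A) \<longrightarrow> (\<forall>c\<in>set cs. kclause_sem A P Rs v c))"

fun prefix_sem :: "tstruct \<Rightarrow> (bool \<times> nat) list \<Rightarrow> (bool \<times> nat) list \<Rightarrow> nat list set list \<Rightarrow> kclause list \<Rightarrow> bool" where
  "prefix_sem A P [] Rs cs = matrix_sem A P Rs cs"
| "prefix_sem A P ((q, r) # qs) Rs cs =
     (if q then (\<exists>R. R \<subseteq> {us. length us = r \<and> set us \<subseteq> dom A} \<and> prefix_sem A P qs (Rs @ [R]) cs)
      else (\<forall>R. R \<subseteq> {us. length us = r \<and> set us \<subseteq> dom A} \<longrightarrow> prefix_sem A P qs (Rs @ [R]) cs))"

definition krom_sat :: "tstruct \<Rightarrow> krom \<Rightarrow> bool" where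
  "krom_sat A \<phi> = prefix_sem A (fst \<phi>) (fst \<phi>) [] (snd \<phi>)"

definition krom_defines :: "nat \<Rightarrow> krom \<Rightarrow> tstruct set \<Rightarrow> bool" where
  "krom_defines k \<phi> K \<longleftrightarrow> (\<forall>A. tau_structure k A \<longrightarrow> (krom_sat A \<phi> \<longleftrightarrow> A \<in> K))"

end

theory Submission
  imports Defs
begin


lemma ball_img: "(\<forall>x\<in>f ` A. P x) = (\<forall>y\<in>A. P (f y))" by auto

definition w :: "nat \<Rightarrow> nat \<Rightarrow> nat \<Rightarrow> nat" where "w x y = (\<lambda>n. if n = 0 then x else y)"

fun tvars :: "tatom \<Rightarrow> nat set" where
  "tvars (AClause z) = {z}" | "tvars (AVar h z) = {z}" | "tvars (APos z z') = {z,z'}"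
| "tvars (ANeg z z') = {z,z'}" | "tvars (AEq z z') = {z,z'}"

fun hvars :: "hlit \<Rightarrow> nat set" where
  "hvars (HPos i zs) = set zs" | "hvars (HNeg i zs) = set zs" | "hvars _ = {}"

fun cvars :: "kclause \<Rightarrow> nat set" where
  "cvars (bs, h1, h2) = (\<Union>ba\<in>set bs. tvars (snd ba)) \<union> hvars h1 \<union> hvars h2"

lemma tatom_cong: "\<forall>z\<in>tvars a. v z = v' z \<Longrightarrow> tatom_sem A v a = tatom_sem A v' a"
  by (cases a) auto

lemma hlit_cong:
  assumes "\<forall>z\<in>hvars h. v z = v' z" shows "hlit_sem A P Rs v h = hlit_sem A P Rs v' h"
proof (cases h)
  case (HPos i zs)
  then have "map v zs = map v' zs" using assms by simp
  then show ?thesis using HPos by (simp del: map_eq_conv)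
next
  case (HNeg i zs)
  then have "map v zs = map v' zs" using assms by simp
  then show ?thesis using HNeg by (simp del: map_eq_conv)
qed auto

lemma kclause_cong: "\<forall>z\<in>cvars c. v z = v' z \<Longrightarrow> kclause_sem A P Rs v c = kclause_sem A P Rs v' c"
proof -
  assume a: "\<forall>z\<in>cvars c. v z = v' z"
  obtain bs h1 h2 where c: "c = (bs, h1, h2)" by (cases c) auto
  have 1: "\<forall>ba\<in>set bs. tatom_sem A v (snd ba) = tatom_sem A v' (snd ba)"
    using a c by (auto intro!: tatom_cong)
  have 2: "hlit_sem A P Rs v h1 = hlit_sem A P Rs v' h1" "hlit_sem A P Rs v h2 = hlit_sem A P Rs v' h2"
    using a c by (auto intro!: hlit_cong)
  show ?thesis unfolding kclause_sem_def c using 1 2 by fastforce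
qed

lemma matrix_sem_01:
  assumes "\<forall>c\<in>set cs. cvars c \<subseteq> {0,1}"
  shows "matrix_sem A P Rs cs \<longleftrightarrow> (\<forall>x\<in>dom A. \<forall>y\<in>dom A. \<forall>c\<in>set cs. kclause_sem A P Rs (w x y) c)"
proof
  assume m: "matrix_sem A P Rs cs"
  show "\<forall>x\<in>dom A. \<forall>y\<in>dom A. \<forall>c\<in>set cs. kclause_sem A P Rs (w x y) c"
  proof (intro ballI)
    fix x y c assume "x \<in> dom A" "y \<in> dom A" "c \<in> set cs"
    moreover have "\<forall>n. w x y n \<in> dom A" using \<open>x \<in> dom A\<close> \<open>y \<in> dom A\<close> by (simp add: w_def)
    ultimately show "kclause_sem A P Rs (w x y) c" using m unfolding matrix_sem_def by blast
  qed
next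
  assume m: "\<forall>x\<in>dom A. \<forall>y\<in>dom A. \<forall>c\<in>set cs. kclause_sem A P Rs (w x y) c"
  show "matrix_sem A P Rs cs" unfolding matrix_sem_def
  proof (intro allI impI ballI)
    fix v :: "nat \<Rightarrow> nat" and c assume v: "\<forall>x. v x \<in> dom A" and c: "c \<in> set cs"
    have "kclause_sem A P Rs (w (v 0) (v 1)) c" using m v c by blast
    moreover have "\<forall>z\<in>cvars c. w (v 0) (v 1) z = v z" using assms c
      by (auto simp: w_def)
    ultimately show "kclause_sem A P Rs v c" using kclause_cong by metis
  qed
qed

lemma prefix_const:
  assumes "\<And>Rs. matrix_sem A P Rs E = C"
  shows "prefix_sem A P qs Rs (E @ D) = (C \<and> prefix_sem A P qs Rs D)"
proof (induction qs arbitrary: Rs)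
  case Nil
  have "matrix_sem A P Rs (E @ D) = (matrix_sem A P Rs E \<and> matrix_sem A P Rs D)"
    unfolding matrix_sem_def by auto
  then show ?case using assms by simp
next
  case (Cons q qs)
  obtain b r where q: "q = (b, r)" by (cases q)
  have e: "{} \<subseteq> {us. length us = r \<and> set us \<subseteq> dom A}" by simp
  show ?case using Cons e unfolding q by auto
qed



declare upt_Suc[simp del]

definition Pk :: "nat \<Rightarrow> (bool \<times> nat) list" where
  "Pk k = map (\<lambda>i. (odd (k - Suc i), 1::nat)) [0..<k] @ [(True, 1)]"

definition E1 :: "nat \<Rightarrow> kclause" where "E1 h = ([(False, AClause 0), (False, AVar h 0)], HBot, HBot)"
definition E2 :: "nat \<Rightarrow> kclause" where
  "E2 k = ((True, AClause 0) # map (\<lambda>h. (True, AVar h 0)) [1..<Suc k], HBot, HBot)"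
definition E3 :: "nat \<Rightarrow> nat \<Rightarrow> kclause" where
  "E3 h h' = ([(False, AVar h 0), (False, AVar h' 0)], HBot, HBot)"
definition E4 :: "kclause list" where
  "E4 = [([(False, APos 0 1), (True, AClause 0)], HBot, HBot),
         ([(False, APos 0 1), (False, AClause 1)], HBot, HBot),
         ([(False, ANeg 0 1), (True, AClause 0)], HBot, HBot),
         ([(False, ANeg 0 1), (False, AClause 1)], HBot, HBot)]"
definition Ecl :: "nat \<Rightarrow> kclause list" where
  "Ecl k = map E1 [1..<Suc k] @ [E2 k] @ concat (map (\<lambda>h. map (E3 h) [Suc h..<Suc k]) [1..<Suc k]) @ E4"

definition D3 :: "nat \<Rightarrow> nat \<Rightarrow> kclause" where
  "D3 k h = ([(False, APos 0 1), (False, AVar h 1)], HNeg k [0], HPos (h - 1) [1])"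
definition D4 :: "nat \<Rightarrow> nat \<Rightarrow> kclause" where
  "D4 k h = ([(False, ANeg 0 1), (False, AVar h 1)], HNeg k [0], HNeg (h - 1) [1])"
definition Dcl :: "nat \<Rightarrow> kclause list" where
  "Dcl k = [([], HEx k, HBot), ([(True, AClause 0)], HNeg k [0], HBot)] @ map (D3 k) [1..<Suc k] @ map (D4 k) [1..<Suc k]"

lemma Ecl_vars: "\<forall>c\<in>set (Ecl k). cvars c \<subseteq> {0,1}"
  by (auto simp: Ecl_def E1_def E2_def E3_def E4_def)

lemma Dcl_vars: "\<forall>c\<in>set (Dcl k). cvars c \<subseteq> {0,1}"
  by (auto simp: Dcl_def D3_def D4_def)

lemma Ecl_sem:
  assumes tau: "tau_structure k A"
  shows "(\<forall>x\<in>dom A. \<forall>y\<in>dom A. \<forall>c\<in>set (Ecl k). kclause_sem A P Rs (w x y) c) \<longleftrightarrow> encodes_qdnf k A"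
    (is "?L \<longleftrightarrow> _")
proof
  assume L: ?L
  have e1: "\<not> Clause A x \<or> \<not> Var A h x" if "x \<in> dom A" "1 \<le> h" "h \<le> k" for x h
  proof -
    have "E1 h \<in> set (Ecl k)" using that unfolding Ecl_def by simp
    then have "kclause_sem A P Rs (w x x) (E1 h)" using L that by blast
    then show ?thesis by (simp add: E1_def kclause_sem_def w_def)
  qed
  have e2: "Clause A x \<or> (\<exists>h. 1 \<le> h \<and> h \<le> k \<and> Var A h x)" if "x \<in> dom A" for x
  proof -
    have "E2 k \<in> set (Ecl k)" unfolding Ecl_def by simp
    then have "kclause_sem A P Rs (w x x) (E2 k)" using L that by blast
    then show ?thesis by (auto simp: E2_def kclause_sem_def w_def)
  qed
  have e3: "\<not> Var A h x \<or> \<not> Var A h' x" if "x \<in> dom A" "1 \<le> h" "h < h'" "h' \<le> k" for x h h'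
  proof -
    have "E3 h h' \<in> set (Ecl k)" using that unfolding Ecl_def by fastforce
    then have "kclause_sem A P Rs (w x x) (E3 h h')" using L that by blast
    then show ?thesis by (simp add: E3_def kclause_sem_def w_def)
  qed
  have e4: "\<forall>c\<in>set E4. kclause_sem A P Rs (w x y) c" if "x \<in> dom A" "y \<in> dom A" for x y
  proof -
    have "set E4 \<subseteq> set (Ecl k)" unfolding Ecl_def by auto
    then show ?thesis using L that by blast
  qed
  have vk: "1 \<le> h \<and> h \<le> k \<and> x \<in> dom A" if "Var A h x" for h x
    using tau that unfolding tau_structure_def by blast
  show "encodes_qdnf k A" unfolding encodes_qdnf_def
  proof (intro conjI ballI allI impI)
    fix x assume x: "x \<in> dom A"
    show "Clause A x \<and> (\<forall>h. \<not> Var A h x) \<or> \<not> Clause A x \<and> (\<exists>!h. Var A h x)"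
    proof (cases "Clause A x")
      case True then show ?thesis using e1[OF x] vk by blast
    next
      case False
      then obtain h where h: "Var A h x" using e2[OF x] by blast
      have "h' = h" if "Var A h' x" for h'
      proof (rule ccontr)
        assume "h' \<noteq> h"
        then consider "h' < h" | "h < h'" by linarith
        then show False using e3[OF x] vk h that by (cases; blast)
      qed
      then show ?thesis using False h by blast
    qed
  next
    fix i j assume "Pos A i j"
    moreover then have "i \<in> dom A" "j \<in> dom A" using tau unfolding tau_structure_def by auto
    ultimately show "Clause A i" "\<not> Clause A j" using e4[of i j]
      by (auto simp: E4_def kclause_sem_def w_def)
  next
    fix i j assume "Neg A i j"
    moreover then have "i \<in> dom A" "j \<in> dom A" using tau unfolding tau_structure_def by auto
    ultimately show "Clause A i" "\<not> Clause A j" using e4[of i j]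
      by (auto simp: E4_def kclause_sem_def w_def)
  qed
next
  assume enc: "encodes_qdnf k A"
  have vk: "1 \<le> h \<and> h \<le> k \<and> x \<in> dom A" if "Var A h x" for h x
    using tau that unfolding tau_structure_def by blast
  show ?L
  proof (intro ballI)
    fix x y c assume x: "x \<in> dom A" and y: "y \<in> dom A" and c: "c \<in> set (Ecl k)"
    have ex: "(Clause A x \<and> (\<forall>h. \<not> Var A h x)) \<or> (\<not> Clause A x \<and> (\<exists>!h. Var A h x))"
      using enc x unfolding encodes_qdnf_def by blast
    have pn: "\<forall>i j. Pos A i j \<longrightarrow> Clause A i \<and> \<not> Clause A j" "\<forall>i j. Neg A i j \<longrightarrow> Clause A i \<and> \<not> Clause A j"
      using enc unfolding encodes_qdnf_def by auto
    from c consider (a) h where "c = E1 h" | (b) "c = E2 k" | (c) h h' where "c = E3 h h'" "h < h'"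
      | (d) "c \<in> set E4" unfolding Ecl_def by auto
    then show "kclause_sem A P Rs (w x y) c"
    proof cases
      case a then show ?thesis using ex by (auto simp: E1_def kclause_sem_def w_def)
    next
      case b
      show ?thesis
      proof (cases "Clause A x")
        case True then show ?thesis using b by (auto simp: E2_def kclause_sem_def w_def)
      next
        case False
        then obtain h where "Var A h x" using ex by blast
        then show ?thesis using b vk[of h x] by (force simp: E2_def kclause_sem_def w_def)
      qed
    next
      case c then show ?thesis using ex by (auto simp: E3_def kclause_sem_def w_def)
    next
      case d then show ?thesis using pn by (auto simp: E4_def kclause_sem_def w_def)
    qed
  qed
qed



lemma length_Pk: "length (Pk k) = Suc k" by (simp add: Pk_def)

lemma Pk_k: "Pk k ! k = (True, 1)" by (simp add: Pk_def nth_append)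

lemma Pk_i: "i < k \<Longrightarrow> Pk k ! i = (odd (k - Suc i), 1)" by (simp add: Pk_def nth_append)

lemma D_base:
  assumes tau: "tau_structure k A" and enc: "encodes_qdnf k A" and len: "length Rs = k"
    and inv: "\<forall>h j. Var A h j \<longrightarrow> h \<le> k \<longrightarrow> (\<sigma> j \<longleftrightarrow> [j] \<in> Rs ! (h - 1))"
  shows "(\<exists>S. S \<subseteq> {us. length us = 1 \<and> set us \<subseteq> dom A} \<and> matrix_sem A (Pk k) (Rs @ [S]) (Dcl k))
         \<longleftrightarrow> dnf_true A \<sigma>"
proof -
  have vk: "1 \<le> h \<and> h \<le> k \<and> x \<in> dom A" if "Var A h x" for h x
    using tau that unfolding tau_structure_def by blast
  have pd: "i \<in> dom A \<and> j \<in> dom A" if "Pos A i j \<or> Neg A i j" for i j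
    using tau that unfolding tau_structure_def by blast
  have pn: "\<forall>i j. Pos A i j \<longrightarrow> Clause A i \<and> \<not> Clause A j" "\<forall>i j. Neg A i j \<longrightarrow> Clause A i \<and> \<not> Clause A j"
    using enc unfolding encodes_qdnf_def by auto
  have hasv: "\<exists>h. Var A h j" if "j \<in> dom A" "\<not> Clause A j" for j
    using enc that unfolding encodes_qdnf_def by blast
  have nthS: "(Rs @ [S]) ! k = S" for S :: "nat list set" using len by (metis nth_append_length)
  have nthR: "(Rs @ [S]) ! (h - 1) = Rs ! (h - 1)" if "1 \<le> h" "h \<le> k" for S :: "nat list set" and h
  proof -
    have "h - 1 < length Rs" using len that by linarith
    then show ?thesis by (simp add: nth_append)
  qed
  have nthR': "(Rs @ [S]) ! (h - Suc 0) = Rs ! (h - Suc 0)" if "Suc 0 \<le> h" "h < Suc k" for S :: "nat list set" and h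
    using nthR[of h S] that by simp
  have ms: "matrix_sem A (Pk k) (Rs @ [S]) (Dcl k) \<longleftrightarrow>
     (\<exists>us. length us = 1 \<and> set us \<subseteq> dom A \<and> us \<in> S) \<and>
     (\<forall>x\<in>dom A. [x] \<in> S \<longrightarrow> Clause A x \<and>
        (\<forall>y\<in>dom A. \<forall>h. 1 \<le> h \<and> h \<le> k \<longrightarrow>
           (Pos A x y \<and> Var A h y \<longrightarrow> [y] \<in> Rs ! (h - 1)) \<and>
           (Neg A x y \<and> Var A h y \<longrightarrow> [y] \<notin> Rs ! (h - 1))))" for S
  proof -
    have ne: "dom A \<noteq> {}" using tau unfolding tau_structure_def by blast
    have "matrix_sem A (Pk k) (Rs @ [S]) (Dcl k) \<longleftrightarrow>
      (\<forall>x\<in>dom A. \<forall>y\<in>dom A. (\<exists>us. length us = 1 \<and> set us \<subseteq> dom A \<and> us \<in> S) \<and> (Clause A x \<or> [x] \<notin> S) \<and>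
        (\<forall>h\<in>{1..<Suc k}. \<not> Pos A x y \<or> \<not> Var A h y \<or> [x] \<notin> S \<or> [y] \<in> Rs ! (h - 1)) \<and>
        (\<forall>h\<in>{1..<Suc k}. \<not> Neg A x y \<or> \<not> Var A h y \<or> [x] \<notin> S \<or> [y] \<notin> Rs ! (h - 1)))"
      unfolding matrix_sem_01[OF Dcl_vars]
      by (simp add: Dcl_def D3_def D4_def kclause_sem_def w_def Pk_k nthS ball_img ball_Un nthR') blast
    also have "\<dots> \<longleftrightarrow> (\<exists>us. length us = 1 \<and> set us \<subseteq> dom A \<and> us \<in> S) \<and>
      (\<forall>x\<in>dom A. \<forall>y\<in>dom A. (Clause A x \<or> [x] \<notin> S) \<and>
        (\<forall>h\<in>{1..<Suc k}. \<not> Pos A x y \<or> \<not> Var A h y \<or> [x] \<notin> S \<or> [y] \<in> Rs ! (h - 1)) \<and>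
        (\<forall>h\<in>{1..<Suc k}. \<not> Neg A x y \<or> \<not> Var A h y \<or> [x] \<notin> S \<or> [y] \<notin> Rs ! (h - 1)))"
      using ne by blast
    also have "\<dots> \<longleftrightarrow> (\<exists>us. length us = 1 \<and> set us \<subseteq> dom A \<and> us \<in> S) \<and>
     (\<forall>x\<in>dom A. [x] \<in> S \<longrightarrow> Clause A x \<and>
        (\<forall>y\<in>dom A. \<forall>h. 1 \<le> h \<and> h \<le> k \<longrightarrow>
           (Pos A x y \<and> Var A h y \<longrightarrow> [y] \<in> Rs ! (h - 1)) \<and>
           (Neg A x y \<and> Var A h y \<longrightarrow> [y] \<notin> Rs ! (h - 1))))"
    proof (intro conj_cong refl iffI)
      assume H: "\<forall>x\<in>dom A. \<forall>y\<in>dom A. (Clause A x \<or> [x] \<notin> S) \<and>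
        (\<forall>h\<in>{1..<Suc k}. \<not> Pos A x y \<or> \<not> Var A h y \<or> [x] \<notin> S \<or> [y] \<in> Rs ! (h - 1)) \<and>
        (\<forall>h\<in>{1..<Suc k}. \<not> Neg A x y \<or> \<not> Var A h y \<or> [x] \<notin> S \<or> [y] \<notin> Rs ! (h - 1))"
      show "\<forall>x\<in>dom A. [x] \<in> S \<longrightarrow> Clause A x \<and>
        (\<forall>y\<in>dom A. \<forall>h. 1 \<le> h \<and> h \<le> k \<longrightarrow>
           (Pos A x y \<and> Var A h y \<longrightarrow> [y] \<in> Rs ! (h - 1)) \<and>
           (Neg A x y \<and> Var A h y \<longrightarrow> [y] \<notin> Rs ! (h - 1)))"
      proof (intro ballI impI)
        fix x assume x: "x \<in> dom A" and xS: "[x] \<in> S"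
        show "Clause A x \<and>
        (\<forall>y\<in>dom A. \<forall>h. 1 \<le> h \<and> h \<le> k \<longrightarrow>
           (Pos A x y \<and> Var A h y \<longrightarrow> [y] \<in> Rs ! (h - 1)) \<and>
           (Neg A x y \<and> Var A h y \<longrightarrow> [y] \<notin> Rs ! (h - 1)))"
          using H x xS by auto
      qed
    next
      assume H: "\<forall>x\<in>dom A. [x] \<in> S \<longrightarrow> Clause A x \<and>
        (\<forall>y\<in>dom A. \<forall>h. 1 \<le> h \<and> h \<le> k \<longrightarrow>
           (Pos A x y \<and> Var A h y \<longrightarrow> [y] \<in> Rs ! (h - 1)) \<and>
           (Neg A x y \<and> Var A h y \<longrightarrow> [y] \<notin> Rs ! (h - 1)))"
      show "\<forall>x\<in>dom A. \<forall>y\<in>dom A. (Clause A x \<or> [x] \<notin> S) \<and>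
        (\<forall>h\<in>{1..<Suc k}. \<not> Pos A x y \<or> \<not> Var A h y \<or> [x] \<notin> S \<or> [y] \<in> Rs ! (h - 1)) \<and>
        (\<forall>h\<in>{1..<Suc k}. \<not> Neg A x y \<or> \<not> Var A h y \<or> [x] \<notin> S \<or> [y] \<notin> Rs ! (h - 1))"
        using H by auto
    qed
    finally show ?thesis .
  qed
  show ?thesis
  proof
    assume "\<exists>S. S \<subseteq> {us. length us = 1 \<and> set us \<subseteq> dom A} \<and> matrix_sem A (Pk k) (Rs @ [S]) (Dcl k)"
    then obtain S where S: "matrix_sem A (Pk k) (Rs @ [S]) (Dcl k)" by blast
    note M = iffD1[OF ms S]
    obtain us where us: "length us = 1" "set us \<subseteq> dom A" "us \<in> S" using conjunct1[OF M] by blast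
    then obtain x where x: "us = [x]" by (cases us) auto
    have xd: "x \<in> dom A" using us x by simp
    have xS: "[x] \<in> S" using us x by simp
    note P = conjunct2[OF M, rule_format, OF xd xS]
    show "dnf_true A \<sigma>" unfolding dnf_true_def
    proof (intro bexI[OF _ xd] conjI ballI)
      show "Clause A x" using P by blast
    next
      fix j assume j: "j \<in> dom A"
      show "Pos A x j \<longrightarrow> \<sigma> j"
      proof
        assume p: "Pos A x j"
        then have "\<not> Clause A j" using pn by blast
        then obtain h where h: "Var A h j" using hasv j by blast
        have hk: "1 \<le> h \<and> h \<le> k" using vk[OF h] by blast
        have "[j] \<in> Rs ! (h - 1)" using conjunct2[OF P, rule_format, OF j hk] p h by blast
        then show "\<sigma> j" using inv h hk by blast
      qed
      show "Neg A x j \<longrightarrow> \<not> \<sigma> j"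
      proof
        assume p: "Neg A x j"
        then have "\<not> Clause A j" using pn by blast
        then obtain h where h: "Var A h j" using hasv j by blast
        have hk: "1 \<le> h \<and> h \<le> k" using vk[OF h] by blast
        have "[j] \<notin> Rs ! (h - 1)" using conjunct2[OF P, rule_format, OF j hk] p h by blast
        then show "\<not> \<sigma> j" using inv h hk by blast
      qed
    qed
  next
    assume "dnf_true A \<sigma>"
    then obtain i where i: "i \<in> dom A" "Clause A i"
      "\<forall>j\<in>dom A. (Pos A i j \<longrightarrow> \<sigma> j) \<and> (Neg A i j \<longrightarrow> \<not> \<sigma> j)"
      unfolding dnf_true_def by blast
    have "(\<exists>us. length us = 1 \<and> set us \<subseteq> dom A \<and> us \<in> {[i]}) \<and>
     (\<forall>x\<in>dom A. [x] \<in> {[i]} \<longrightarrow> Clause A x \<and>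
        (\<forall>y\<in>dom A. \<forall>h. 1 \<le> h \<and> h \<le> k \<longrightarrow>
           (Pos A x y \<and> Var A h y \<longrightarrow> [y] \<in> Rs ! (h - 1)) \<and>
           (Neg A x y \<and> Var A h y \<longrightarrow> [y] \<notin> Rs ! (h - 1))))"
    proof (intro conjI ballI impI allI)
      show "\<exists>us. length us = 1 \<and> set us \<subseteq> dom A \<and> us \<in> {[i]}" using i by (intro exI[of _ "[i]"]) simp
    next
      fix x assume "[x] \<in> {[i]}" then have xi: "x = i" by simp
      show "Clause A x" using xi i by simp
      fix y h assume y: "y \<in> dom A" and hk: "1 \<le> h \<and> h \<le> k"
      show "[y] \<in> Rs ! (h - 1)" if "Pos A x y \<and> Var A h y" using that xi i y hk inv by blast
      show "[y] \<notin> Rs ! (h - 1)" if "Neg A x y \<and> Var A h y" using that xi i y hk inv by blast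
    qed
    then have "matrix_sem A (Pk k) (Rs @ [{[i]}]) (Dcl k)" using ms by blast
    moreover have "{[i]} \<subseteq> {us. length us = 1 \<and> set us \<subseteq> dom A}" using i by auto
    ultimately show "\<exists>S. S \<subseteq> {us. length us = 1 \<and> set us \<subseteq> dom A} \<and> matrix_sem A (Pk k) (Rs @ [S]) (Dcl k)"
      by blast
  qed
qed



lemma drop_Pk_Suc:
  assumes "Suc n \<le> k"
  shows "drop (k - Suc n) (Pk k) = (odd n, 1) # drop (k - n) (Pk k)"
proof -
  have l: "k - Suc n < length (Pk k)" using assms by (simp add: length_Pk)
  have "Pk k ! (k - Suc n) = (odd n, 1)"
  proof -
    have "k - Suc n < k" using assms by simp
    moreover have "k - Suc (k - Suc n) = n" using assms by simp
    ultimately show ?thesis using Pk_i[of "k - Suc n" k] by simp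
  qed
  moreover have "Suc (k - Suc n) = k - n" using assms by simp
  ultimately show ?thesis using Cons_nth_drop_Suc[OF l] by metis
qed

lemma drop_Pk_0: "drop k (Pk k) = [(True, 1)]"
  by (simp add: Pk_def)

lemma inv_step:
  assumes tau: "tau_structure k A" and enc: "encodes_qdnf k A"
    and sn: "Suc n \<le> k" and len: "length Rs = k - Suc n"
    and inv: "\<forall>h j. Var A h j \<longrightarrow> h \<le> k - Suc n \<longrightarrow> (\<sigma> j \<longleftrightarrow> [j] \<in> Rs ! (h - 1))"
    and Rf: "\<forall>j\<in>dom A. Var A (k - n) j \<longrightarrow> ([j] \<in> R \<longleftrightarrow> f j)"
  shows "\<forall>h j. Var A h j \<longrightarrow> h \<le> k - n \<longrightarrow>
           (upd_block A (k - n) f \<sigma> j \<longleftrightarrow> [j] \<in> (Rs @ [R]) ! (h - 1))"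
proof (intro allI impI)
  fix h j assume v: "Var A h j" and hle: "h \<le> k - n"
  have vk: "1 \<le> h \<and> h \<le> k \<and> j \<in> dom A"
    using tau v unfolding tau_structure_def by blast
  show "upd_block A (k - n) f \<sigma> j \<longleftrightarrow> [j] \<in> (Rs @ [R]) ! (h - 1)"
  proof (cases "h = k - n")
    case True
    have "h - 1 = length Rs" using True len sn by simp
    then have "(Rs @ [R]) ! (h - 1) = R" by simp
    then show ?thesis using True v vk Rf unfolding upd_block_def by simp
  next
    case False
    then have hl: "h \<le> k - Suc n" using hle by simp
    have "\<exists>!h. Var A h j" using enc v vk unfolding encodes_qdnf_def by blast
    then have nv: "\<not> Var A (k - n) j" using v False by blast
    have "h - 1 < length Rs" using hl vk len by arith
    then have "(Rs @ [R]) ! (h - 1) = Rs ! (h - 1)" by (simp add: nth_append)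
    then show ?thesis using nv inv v hl unfolding upd_block_def by simp
  qed
qed

lemma main_ind:
  assumes tau: "tau_structure k A" and enc: "encodes_qdnf k A"
  shows "n \<le> k \<Longrightarrow> length Rs = k - n \<Longrightarrow>
    (\<forall>h j. Var A h j \<longrightarrow> h \<le> k - n \<longrightarrow> (\<sigma> j \<longleftrightarrow> [j] \<in> Rs ! (h - 1))) \<Longrightarrow>
    prefix_sem A (Pk k) (drop (k - n) (Pk k)) Rs (Dcl k) \<longleftrightarrow> qeval A k (even n) n \<sigma>"
proof (induction n arbitrary: Rs \<sigma>)
  case 0
  then have "length Rs = k" "\<forall>h j. Var A h j \<longrightarrow> h \<le> k \<longrightarrow> (\<sigma> j \<longleftrightarrow> [j] \<in> Rs ! (h - 1))" by simp_all
  from D_base[OF tau enc this] show ?case by (simp add: drop_Pk_0)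
next
  case (Suc n)
  let ?U = "{us. length us = 1 \<and> set us \<subseteq> dom A}"
  let ?PS = "\<lambda>R. prefix_sem A (Pk k) (drop (k - n) (Pk k)) (Rs @ [R]) (Dcl k)"
  let ?Q = "\<lambda>f. qeval A k (even n) n (upd_block A (k - n) f \<sigma>)"
  have len': "length (Rs @ [R]) = k - n" for R using Suc.prems by simp
  have nk: "n \<le> k" using Suc.prems by simp
  have c1: "?PS R \<longleftrightarrow> ?Q (\<lambda>j. [j] \<in> R)" for R
    using Suc.IH[OF nk len' inv_step[OF tau enc Suc.prems(1) Suc.prems(2) Suc.prems(3)]] by simp
  have c2: "?PS {[j] |j. j \<in> dom A \<and> f j} \<longleftrightarrow> ?Q f" for f
  proof -
    have "\<forall>j\<in>dom A. Var A (k - n) j \<longrightarrow> ([j] \<in> {[j] |j. j \<in> dom A \<and> f j} \<longleftrightarrow> f j)" by auto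
    from Suc.IH[OF nk len' inv_step[OF tau enc Suc.prems(1) Suc.prems(2) Suc.prems(3) this]]
    show ?thesis .
  qed
  have sub: "{[j] |j. j \<in> dom A \<and> f j} \<subseteq> ?U" for f by auto
  have ex: "(\<exists>R. R \<subseteq> ?U \<and> ?PS R) \<longleftrightarrow> (\<exists>f. ?Q f)"
  proof
    assume "\<exists>R. R \<subseteq> ?U \<and> ?PS R"
    then obtain R where "?PS R" by blast
    then have "?Q (\<lambda>j. [j] \<in> R)" using c1 by blast
    then show "\<exists>f. ?Q f" by blast
  next
    assume "\<exists>f. ?Q f"
    then obtain f where "?Q f" by blast
    then have "?PS {[j] |j. j \<in> dom A \<and> f j}" using c2 by blast
    then show "\<exists>R. R \<subseteq> ?U \<and> ?PS R" using sub by blast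
  qed
  have al: "(\<forall>R. R \<subseteq> ?U \<longrightarrow> ?PS R) \<longleftrightarrow> (\<forall>f. ?Q f)"
  proof
    assume H: "\<forall>R. R \<subseteq> ?U \<longrightarrow> ?PS R"
    show "\<forall>f. ?Q f"
    proof
      fix f
      have "?PS {[j] |j. j \<in> dom A \<and> f j}" using H sub by blast
      then show "?Q f" using c2 by blast
    qed
  next
    assume H: "\<forall>f. ?Q f"
    show "\<forall>R. R \<subseteq> ?U \<longrightarrow> ?PS R"
    proof (intro allI impI)
      fix R
      have "?Q (\<lambda>j. [j] \<in> R)" using H by blast
      then show "?PS R" using c1 by blast
    qed
  qed
  have "prefix_sem A (Pk k) (drop (k - Suc n) (Pk k)) Rs (Dcl k) =
    (if odd n then (\<exists>R. R \<subseteq> ?U \<and> ?PS R) else (\<forall>R. R \<subseteq> ?U \<longrightarrow> ?PS R))"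
    unfolding drop_Pk_Suc[OF Suc.prems(1)] by (simp only: prefix_sem.simps)
  also have "\<dots> = (if odd n then (\<exists>f. ?Q f) else (\<forall>f. ?Q f))" using ex al by simp
  also have "\<dots> = qeval A k (even (Suc n)) (Suc n) \<sigma>" by simp
  finally show ?case .
qed



lemma alt_cons: "xs \<noteq> [] \<Longrightarrow> alternations (a # xs) = (if a = hd xs then 0 else 1) + alternations xs"
  by (cases xs) auto

definition Lst :: "nat \<Rightarrow> bool list" where
  "Lst n = map (\<lambda>i. odd (n - Suc i)) [0..<n] @ [True]"

lemma Lst_Suc: "Lst (Suc n) = odd n # Lst n"
proof -
  have "[0..<Suc n] = 0 # map Suc [0..<n]" by (simp add: map_Suc_upt upt_conv_Cons del: upt_Suc)
  then show ?thesis unfolding Lst_def by (simp del: upt_Suc)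
qed

lemma hd_Lst: "hd (Lst n) = (n = 0 \<or> odd (n - 1))"
proof (cases n)
  case 0 then show ?thesis by (simp add: Lst_def)
next
  case (Suc m) then show ?thesis by (simp only: Lst_Suc) simp
qed

lemma alt_Lst: "alternations (Lst n) = n"
proof (induction n)
  case 0 then show ?case by (simp add: Lst_def)
next
  case (Suc n)
  have ne: "Lst n \<noteq> []" by (simp add: Lst_def)
  have "odd n \<noteq> hd (Lst n)" by (cases n) (simp_all add: hd_Lst)
  then show ?case using Suc ne by (simp add: Lst_Suc alt_cons)
qed

lemma map_fst_Pk: "map fst (Pk k) = Lst k"
  by (simp add: Pk_def Lst_def del: upt_Suc)

lemma snd_Pk: "i < Suc k \<Longrightarrow> snd (Pk k ! i) = 1"
  by (cases "i < k") (auto simp: Pk_i Pk_k less_Suc_eq)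

lemma hd_Pk: "1 \<le> k \<Longrightarrow> fst (hd (Pk k)) = odd (k - 1)"
  by (cases k) (simp_all add: Pk_def upt_conv_Cons del: upt_Suc)

definition phi :: "nat \<Rightarrow> krom" where "phi k = (Pk k, Ecl k @ Dcl k)"

lemma phi_wf: "krom_wf k (phi k)"
  unfolding krom_wf_def phi_def
  by (auto simp: Ecl_def E1_def E2_def E3_def E4_def Dcl_def D3_def D4_def length_Pk snd_Pk Pk_k)

lemma phi_class: "1 \<le> k \<Longrightarrow> krom_class (odd (k - 1)) (k + 1) k (phi k)"
  unfolding krom_class_def using phi_wf
  by (simp add: phi_def hd_Pk map_fst_Pk alt_Lst length_Pk del: upt_Suc)
      (simp add: Pk_def)

lemma phi_sat:
  assumes tau: "tau_structure k A"
  shows "krom_sat A (phi k) \<longleftrightarrow> encodes_qdnf k A \<and> qeval A k (even k) k (\<lambda>_. False)"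
proof -
  have E: "matrix_sem A (Pk k) Rs (Ecl k) = encodes_qdnf k A" for Rs
    using matrix_sem_01[OF Ecl_vars] Ecl_sem[OF tau] by simp
  have "krom_sat A (phi k) = (encodes_qdnf k A \<and> prefix_sem A (Pk k) (Pk k) [] (Dcl k))"
    unfolding krom_sat_def phi_def using prefix_const[of A "Pk k" "Ecl k", OF E] by simp
  also have "\<dots> = (encodes_qdnf k A \<and> qeval A k (even k) k (\<lambda>_. False))"
  proof (cases "encodes_qdnf k A")
    case True
    have inv: "\<forall>h j. Var A h j \<longrightarrow> h \<le> k - k \<longrightarrow> ((\<lambda>_. False) j \<longleftrightarrow> [j] \<in> ([]::nat list set list) ! (h - 1))"
      using tau unfolding tau_structure_def by force
    from main_ind[OF tau True, of k "[]", OF _ _ inv] show ?thesis using True by simp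
  qed simp
  finally show ?thesis .
qed


theorem proposition3p1:
  fixes k :: nat
  assumes "k \<ge> 1"
  shows "(even k \<longrightarrow> (\<exists>\<phi>. krom_class True (k + 1) k \<phi> \<and> krom_defines k \<phi> (sigma_dnf_eval k)))
       \<and> (odd k \<longrightarrow> (\<exists>\<phi>. krom_class False (k + 1) k \<phi> \<and> krom_defines k \<phi> (pi_dnf_eval k)))"
proof (intro conjI impI)
  assume e: "even k"
  have o: "odd (k - 1) = True" using e assms by simp
  have "krom_class True (k + 1) k (phi k)" using phi_class[OF assms] unfolding o .
  moreover have "krom_defines k (phi k) (sigma_dnf_eval k)"
    unfolding krom_defines_def sigma_dnf_eval_def using phi_sat e by simp
  ultimately show "\<exists>\<phi>. krom_class True (k + 1) k \<phi> \<and> krom_defines k \<phi> (sigma_dnf_eval k)" by blast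
next
  assume e: "odd k"
  have o: "odd (k - 1) = False" using e assms by simp
  have "krom_class False (k + 1) k (phi k)" using phi_class[OF assms] unfolding o .
  moreover have "krom_defines k (phi k) (pi_dnf_eval k)"
    unfolding krom_defines_def pi_dnf_eval_def using phi_sat e by simp
  ultimately show "\<exists>\<phi>. krom_class False (k + 1) k \<phi> \<and> krom_defines k \<phi> (pi_dnf_eval k)" by blast
qed

end
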